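(* Let $X_1,X_2,\dots,X_n$ be independent nonnegative random variables and set $S_n=X_1+\dots+X_n$. For $L\ge0$ such that $\mathbb{P}(S_n\le L)>0$ and any $\delta,\delta'$ with $0<\delta'\le\delta$, \[\mathbb{P}(X_1\ge\delta\mid S_n\le L)\le\frac{L}{\mathbb{P}(X_1\le\delta-\delta')\sum_{k=2}^n\mathbb{E}\big[X_k\mathbf{1}_{\{X_k\le\delta'\}}\big]}.\] *)

theory Defs
  imports "HOL-Probability.Probability"
begin

end

theory Submission
  imports Defs
begin

lemma (in prob_space) triple_indep:
  fixes X :: "nat \<Rightarrow> 'a \<Rightarrow> real"
  assumes ind: "indep_vars (\<lambda>_. borel) X {1..n}"
    and nn: "\<And>k \<omega>. k \<in> {1..n} \<Longrightarrow> \<omega> \<in> space M \<Longrightarrow> X k \<omega> \<ge> 0"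
    and k: "k \<in> {2..n}" and b: "b \<ge> 0"
  shows "(\<integral>\<omega>. indicator {x. x \<le> a} (X 1 \<omega>) * (X k \<omega> * indicator {x. x \<le> b} (X k \<omega>) *
            indicator {x. x \<le> c} (\<Sum>j\<in>{2..n}-{k}. X j \<omega>)) \<partial>M)
       = (\<integral>\<omega>. indicator {x. x \<le> a} (X 1 \<omega>) \<partial>M) * (\<integral>\<omega>. X k \<omega> * indicator {x. x \<le> b} (X k \<omega>) \<partial>M)
         * (\<integral>\<omega>. indicator {x. x \<le> c} (\<Sum>j\<in>{2..n}-{k}. X j \<omega>) \<partial>M)"
proof -
  define K where "K j = (if j = (0::nat) then {1} else if j = 1 then {k} else {2..n}-{k})" for j
  define f :: "nat \<Rightarrow> (nat \<Rightarrow> real) \<Rightarrow> real" where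
    "f j r = (if j = 0 then indicator {x. x \<le> a} (r 1) else if j = 1 then r k * indicator {x. x \<le> b} (r k)
       else indicator {x. x \<le> c} (\<Sum>j\<in>{2..n}-{k}. r j))" for j r
  define Z where "Z j \<omega> = f j (restrict (\<lambda>i. X i \<omega>) (K j))" for j \<omega>
  have ind2: "indep_vars (\<lambda>j. PiM (K j) (\<lambda>_. borel)) (\<lambda>j \<omega>. restrict (\<lambda>i. X i \<omega>) (K j)) {0,1,2}"
    by (rule indep_vars_restrict[OF ind]) (use k in \<open>auto simp: K_def disjoint_family_on_def\<close>)
  have meas: "f j \<in> borel_measurable (PiM (K j) (\<lambda>_. borel))" if jin: "j \<in> {0,1,2}" for j
  proof -
    consider "j = 0" | "j = 1" | "j = 2" using jin by blast
    then show ?thesis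
    proof cases
      case 1
      have [measurable]: "(\<lambda>r. r 1) \<in> borel_measurable (PiM (K j) (\<lambda>_. borel))"
        by (rule measurable_component_singleton) (simp add: K_def 1)
      have "f j = (\<lambda>r. indicator {x. x \<le> a} (r 1))" by (simp add: f_def 1 fun_eq_iff)
      then show ?thesis by (simp only:) measurable
    next
      case 2
      have [measurable]: "(\<lambda>r. r k) \<in> borel_measurable (PiM (K j) (\<lambda>_. borel))"
        by (rule measurable_component_singleton) (simp add: K_def 2)
      have "f j = (\<lambda>r. r k * indicator {x. x \<le> b} (r k))" by (simp add: f_def 2 fun_eq_iff)
      then show ?thesis by (simp only:) measurable
    next
      case 3
      have [measurable]: "(\<lambda>r. r i) \<in> borel_measurable (PiM (K j) (\<lambda>_. borel))" if "i \<in> {2..n}-{k}" for i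
        by (rule measurable_component_singleton) (use that in \<open>simp add: K_def 3\<close>)
      have "f j = (\<lambda>r. indicator {x. x \<le> c} (\<Sum>j\<in>{2..n}-{k}. r j))" by (simp add: f_def 3 fun_eq_iff)
      then show ?thesis by (simp only:) measurable
    qed
  qed
  have indZ: "indep_vars (\<lambda>_. borel) Z {0,1,2}"
    unfolding Z_def by (rule indep_vars_compose2[OF ind2 meas])
  have rvX: "random_variable borel (X i)" if "i \<in> {1..n}" for i
    using ind that by (auto simp: indep_vars_def)
  have Z0: "Z 0 \<omega> = indicator {x. x \<le> a} (X 1 \<omega>)" for \<omega> by (simp add: Z_def f_def K_def)
  have Z1: "Z (Suc 0) \<omega> = X k \<omega> * indicator {x. x \<le> b} (X k \<omega>)" for \<omega> by (simp add: Z_def f_def K_def)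
  have Z2: "Z 2 \<omega> = indicator {x. x \<le> c} (\<Sum>j\<in>{2..n}-{k}. X j \<omega>)" for \<omega>
    by (auto simp: Z_def f_def K_def intro!: arg_cong[where f="indicator _"] sum.cong)
  have intZ: "integrable M (Z j)" if jin: "j \<in> {0,1,2}" for j
  proof (rule integrable_const_bound[where B="max 1 b"])
    show "Z j \<in> borel_measurable M" using indZ that by (auto simp: indep_vars_def)
    show "AE x in M. norm (Z j x) \<le> max 1 b"
    proof (rule AE_I2)
      fix x assume x: "x \<in> space M"
      have "X k x \<ge> 0" using nn[OF _ x, of k] k by auto
      then show "norm (Z j x) \<le> max 1 b"
        using jin Z0[of x] Z1[of x] Z2[of x] b by (auto simp: indicator_def)
    qed
  qed
  have "(\<integral>\<omega>. (\<Prod>j\<in>{0,1,2}. Z j \<omega>) \<partial>M) = (\<Prod>j\<in>{0,1,2}. \<integral>\<omega>. Z j \<omega> \<partial>M)"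
    by (rule indep_vars_lebesgue_integral[OF _ indZ intZ]) auto
  moreover have "Z 0 = (\<lambda>\<omega>. indicator {x. x \<le> a} (X 1 \<omega>))" "Z (Suc 0) = (\<lambda>\<omega>. X k \<omega> * indicator {x. x \<le> b} (X k \<omega>))"
    "Z 2 = (\<lambda>\<omega>. indicator {x. x \<le> c} (\<Sum>j\<in>{2..n}-{k}. X j \<omega>))"
    using Z0 Z1 Z2 by auto
  ultimately show ?thesis by (simp add: mult.assoc)
qed

lemma (in prob_space) int_ind:
  assumes [measurable]: "f \<in> borel_measurable M"
  shows "(\<integral>\<omega>. indicator {x. x \<le> a} (f \<omega>) \<partial>M) = prob {\<omega>\<in>space M. f \<omega> \<le> a}"
proof -
  have "(\<integral>\<omega>. indicator {x. x \<le> a} (f \<omega>) \<partial>M) = (\<integral>\<omega>. indicator {\<omega>\<in>space M. f \<omega> \<le> a} \<omega> \<partial>M)"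
    by (rule Bochner_Integration.integral_cong) (auto simp: indicator_def)
  also have "\<dots> = prob {\<omega>\<in>space M. f \<omega> \<le> a}"
    by (simp add: Int_absorb2)
  finally show ?thesis .
qed

theorem lemma3p2:
  fixes M :: "'a measure" and X :: "nat \<Rightarrow> 'a \<Rightarrow> real" and n :: nat
    and L \<delta> \<delta>' :: real
  assumes "prob_space M"
    and "n \<ge> 1"
    and "prob_space.indep_vars M (\<lambda>_. borel) X {1..n}"
    and "\<And>k \<omega>. k \<in> {1..n} \<Longrightarrow> \<omega> \<in> space M \<Longrightarrow> X k \<omega> \<ge> 0"
    and "L \<ge> 0"
    and "\<P>(\<omega> in M. (\<Sum>k=1..n. X k \<omega>) \<le> L) > 0"
    and "0 < \<delta>'" and "\<delta>' \<le> \<delta>"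
    and "\<P>(\<omega> in M. X 1 \<omega> \<le> \<delta> - \<delta>')
         * (\<Sum>k=2..n. prob_space.expectation M (\<lambda>\<omega>. X k \<omega> * indicator {x. x \<le> \<delta>'} (X k \<omega>))) > 0"
  shows "\<P>(\<omega> in M. X 1 \<omega> \<ge> \<delta> \<bar> (\<Sum>k=1..n. X k \<omega>) \<le> L)
         \<le> L / (\<P>(\<omega> in M. X 1 \<omega> \<le> \<delta> - \<delta>')
         * (\<Sum>k=2..n. prob_space.expectation M (\<lambda>\<omega>. X k \<omega> * indicator {x. x \<le> \<delta>'} (X k \<omega>))))"
proof -
  interpret prob_space M by fact
  note ind = assms(3)
  note nn = assms(4)
  have rvX: "X i \<in> borel_measurable M" if "i \<in> {1..n}" for i
    using ind that by (auto simp: indep_vars_def)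
  define S where "S \<omega> = (\<Sum>k=1..n. X k \<omega>)" for \<omega>
  define E where "E k = expectation (\<lambda>\<omega>. X k \<omega> * indicator {x. x \<le> \<delta>'} (X k \<omega>))" for k
  define p where "p = prob {\<omega>\<in>space M. X 1 \<omega> \<le> \<delta> - \<delta>'}"
  define q where "q = prob {\<omega>\<in>space M. \<delta> \<le> X 1 \<omega> \<and> S \<omega> \<le> L}"
  define PL where "PL = prob {\<omega>\<in>space M. S \<omega> \<le> L}"
  define A where "A = {\<omega>\<in>space M. S \<omega> \<le> L}"
  have X1[measurable]: "X 1 \<in> borel_measurable M" using rvX assms(2) by auto
  have Sm[measurable]: "S \<in> borel_measurable M"
    unfolding S_def by (rule borel_measurable_sum) (use rvX in auto)
  have Aset[measurable]: "A \<in> sets M" unfolding A_def by measurable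
  have S_split: "S \<omega> = X 1 \<omega> + (\<Sum>k=2..n. X k \<omega>)" for \<omega>
  proof -
    have "{1..n} = insert 1 {2..n}" using assms(2) by auto
    then show ?thesis unfolding S_def by simp
  qed
  have p0: "p \<ge> 0" unfolding p_def by simp
  have E0: "E k \<ge> 0" if "k \<in> {2..n}" for k
    unfolding E_def by (rule integral_nonneg_AE, rule AE_I2) (use nn that in \<open>auto simp: indicator_def\<close>)
  have intk: "integrable M (\<lambda>\<omega>. X k \<omega> * indicator A \<omega>)" if k: "k \<in> {2..n}" for k
  proof (rule integrable_const_bound[where B=L])
    show "(\<lambda>\<omega>. X k \<omega> * indicator A \<omega>) \<in> borel_measurable M" using rvX[of k] k by simp
    show "AE x in M. norm (X k x * indicator A x) \<le> L"
    proof (rule AE_I2)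
      fix x assume x: "x \<in> space M"
      have "X k x \<le> (\<Sum>j=2..n. X j x)"
        by (rule member_le_sum) (use k nn x in auto)
      then have "X k x \<le> S x" using S_split[of x] nn[of 1 x] x assms(2) by auto
      then show "norm (X k x * indicator A x) \<le> L"
        using nn[of k x] k x assms(5) by (auto simp: indicator_def A_def)
    qed
  qed
  have step1: "p * E k * q \<le> (\<integral>\<omega>. X k \<omega> * indicator A \<omega> \<partial>M)" if k: "k \<in> {2..n}" for k
  proof -
    define R where "R \<omega> = (\<Sum>j\<in>{2..n}-{k}. X j \<omega>)" for \<omega>
    have Rm[measurable]: "R \<in> borel_measurable M"
      unfolding R_def by (rule borel_measurable_sum) (use rvX in auto)
    have Xk[measurable]: "X k \<in> borel_measurable M" using rvX k by auto
    have eq: "(\<integral>\<omega>. indicator {x. x \<le> \<delta> - \<delta>'} (X 1 \<omega>) * (X k \<omega> * indicator {x. x \<le> \<delta>'} (X k \<omega>) *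
            indicator {x. x \<le> L - \<delta>} (R \<omega>)) \<partial>M) = p * E k * prob {\<omega>\<in>space M. R \<omega> \<le> L - \<delta>}"
    proof -
      note t = triple_indep[OF ind nn k, of "\<delta>'" "\<delta> - \<delta>'" "L - \<delta>"]
      have "(\<integral>\<omega>. indicator {x. x \<le> L - \<delta>} (R \<omega>) \<partial>M) = prob {\<omega>\<in>space M. R \<omega> \<le> L - \<delta>}"
        by (rule int_ind[OF Rm])
      moreover have "(\<integral>\<omega>. indicator {x. x \<le> \<delta> - \<delta>'} (X 1 \<omega>) \<partial>M) = p"
        unfolding p_def by (rule int_ind[OF X1])
      ultimately show ?thesis using t assms(7) unfolding R_def E_def by simp
    qed
    have Rsplit: "S \<omega> = X 1 \<omega> + X k \<omega> + R \<omega>" for \<omega>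
    proof -
      have "(\<Sum>j=2..n. X j \<omega>) = X k \<omega> + R \<omega>"
        unfolding R_def using k by (subst sum.remove[of _ k]) auto
      then show ?thesis using S_split[of \<omega>] by simp
    qed
    have le: "(\<integral>\<omega>. indicator {x. x \<le> \<delta> - \<delta>'} (X 1 \<omega>) * (X k \<omega> * indicator {x. x \<le> \<delta>'} (X k \<omega>) *
            indicator {x. x \<le> L - \<delta>} (R \<omega>)) \<partial>M) \<le> (\<integral>\<omega>. X k \<omega> * indicator A \<omega> \<partial>M)"
    proof (rule integral_mono'[OF intk[OF k]])
      fix x assume x: "x \<in> space M"
      show "0 \<le> X k x * indicator A x" using nn[of k x] x k by auto
      show "indicator {x. x \<le> \<delta> - \<delta>'} (X 1 x) * (X k x * indicator {x. x \<le> \<delta>'} (X k x) *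
            indicator {x. x \<le> L - \<delta>} (R x)) \<le> X k x * indicator A x"
        using nn[of k x] x k Rsplit[of x] by (auto simp: indicator_def A_def)
    qed
    have qR: "q \<le> prob {\<omega>\<in>space M. R \<omega> \<le> L - \<delta>}"
      unfolding q_def
    proof (rule finite_measure_mono)
      show "{\<omega> \<in> space M. R \<omega> \<le> L - \<delta>} \<in> sets M" by measurable
      show "{\<omega> \<in> space M. \<delta> \<le> X 1 \<omega> \<and> S \<omega> \<le> L} \<subseteq> {\<omega> \<in> space M. R \<omega> \<le> L - \<delta>}"
      proof safe
        fix x assume x: "x \<in> space M" "\<delta> \<le> X 1 x" "S x \<le> L"
        have "0 \<le> X k x" using nn[of k x] x k by auto
        then show "R x \<le> L - \<delta>" using Rsplit[of x] x by linarith
      qed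
    qed
    have "p * E k * q \<le> p * E k * prob {\<omega>\<in>space M. R \<omega> \<le> L - \<delta>}"
      by (rule mult_left_mono[OF qR]) (use p0 E0[OF k] in simp)
    then show ?thesis using eq le by linarith
  qed
  have step2: "(\<Sum>k=2..n. (\<integral>\<omega>. X k \<omega> * indicator A \<omega> \<partial>M)) \<le> L * PL"
  proof -
    have "(\<Sum>k=2..n. (\<integral>\<omega>. X k \<omega> * indicator A \<omega> \<partial>M)) = (\<integral>\<omega>. (\<Sum>k=2..n. X k \<omega> * indicator A \<omega>) \<partial>M)"
      by (rule Bochner_Integration.integral_sum[symmetric]) (rule intk)
    also have "\<dots> \<le> (\<integral>\<omega>. L * indicator A \<omega> \<partial>M)"
    proof (rule integral_mono')
      show "integrable M (\<lambda>\<omega>. L * indicator A \<omega>)" using Aset by (intro integrable_mult_right integrable_real_indicator) (auto simp: emeasure_eq_measure)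
      fix x assume x: "x \<in> space M"
      show "0 \<le> L * indicator A x" using assms(5) by simp
      have "(\<Sum>k=2..n. X k x) \<le> S x" using S_split[of x] nn[of 1 x] x assms(2) by auto
      then show "(\<Sum>k=2..n. X k x * indicator A x) \<le> L * indicator A x"
        by (auto simp: indicator_def A_def sum_distrib_right[symmetric])
    qed
    also have "\<dots> = L * PL" using Aset by (simp add: PL_def A_def[symmetric] Int_absorb2 sets.sets_into_space)
    finally show ?thesis .
  qed
  define c where "c = p * (\<Sum>k=2..n. E k)"
  have c0: "c > 0" using assms(9) unfolding c_def p_def E_def by simp
  have PL0: "PL > 0" using assms(6) unfolding PL_def S_def by simp
  have "q * c = (\<Sum>k=2..n. p * E k * q)" unfolding c_def by (simp add: sum_distrib_left sum_distrib_right mult_ac)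
  also have "\<dots> \<le> (\<Sum>k=2..n. (\<integral>\<omega>. X k \<omega> * indicator A \<omega> \<partial>M))" by (rule sum_mono) (rule step1)
  also have "\<dots> \<le> L * PL" by (rule step2)
  finally have main: "q * c \<le> L * PL" .
  have "q / PL \<le> L / c" using main PL0 c0 by (simp add: divide_simps mult.commute)
  then show ?thesis unfolding cond_prob_def q_def PL_def c_def p_def E_def S_def by simp
qed

end
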